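(* Let $N\ge1$, let the parameter space $\Theta$ of the correlated Bernoulli random graph model be nondegenerate, let $g:\Theta\to\mathbb{R}$, and let $S:\mathcal{X}\to\mathbb{R}$ be an unbiased estimator of $g(\theta)$. Then there exists a uniformly minimum variance unbiased (UMVU) estimator of $g(\theta)$, and in fact $\overline{S}$ is the UMVU estimator of $g(\theta)$.
   Context: Correlated Bernoulli random graph model: fix a positive integer $N$ and let $\mathcal{R}=\{(p_1,\dots,p_N,\varrho_1,\dots,\varrho_N): p_i,\varrho_i\in[0,1]\}$. A parameter space is any subset $\Theta\subseteq\mathcal{R}$. For $\theta\in\Theta$, the random vectors $X,Y\in\{0,1\}^N$ are such that the pairs $(X_i,Y_i)$ are independent across $i$; $X_i,Y_i$ are each marginally Bernoulli$(p_i)$ with Pearson correlation $\varrho_i$ (so $\mathbb{P}(X_i=Y_i=1)=p_i^2+\varrho_ip_i(1-p_i)$, $\mathbb{P}(X_i=Y_i=0)=(1-p_i)^2+\varrho_ip_i(1-p_i)$, $\mathbb{P}(X_i=1,Y_i=0)=\mathbb{P}(X_i=0,Y_i=1)=(1-\varrho_i)p_i(1-p_i)$). Sample space $\mathcal{X}=\{(x,y):x,y\in\{0,1\}^N\}$; an estimator/statistic is a function $\mathcal{X}\to\mathbb{R}$, unbiased for $g$ if $\mathbb{E}_\theta S=g(\theta)$ for all $\theta\in\Theta$. Let $\mathcal{R}^o=\{(p_1,\dots,p_N,0,\dots,0):p_i\in\mathbb{R}\}$; $\Theta$ is nondegenerate if $\Theta\cap\mathcal{R}^o$ has an interior point relative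 to $\mathcal{R}^o$. The disagreement vector $\mathcal{H}:\mathcal{X}\to\{0,\star,1\}^N$ has $i$th component $1$ if $x_i=y_i=1$, $0$ if $x_i=y_i=0$, $\star$ if $x_i\neq y_i$; $\mathcal{X}_h=\mathcal{H}^{-1}(h)$. The balanced variant of $S$ is $\overline{S}(x,y)=\frac{1}{|\mathcal{X}_h|}\sum_{(x',y')\in\mathcal{X}_h}S(x',y')$ with $h=\mathcal{H}(x,y)$. *)

theory Defs
  imports Complex_Main
begin

text \<open>N is the cardinality
  of the finite index type 'n (so N \<ge> 1 automatically). A 0/1 vector is a function
  'n \<Rightarrow> bool (True = 1).\<close>

type_synonym 'n sample = "('n \<Rightarrow> bool) \<times> ('n \<Rightarrow> bool)"
type_synonym 'n param = "('n \<Rightarrow> real) \<times> ('n \<Rightarrow> real)"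

definition R_space :: "'n param set" where
  "R_space = {(p, \<rho>). \<forall>i. p i \<in> {0..1} \<and> \<rho> i \<in> {0..1}}"

text \<open>Joint probability of (X_i, Y_i) = (a, b) for marginal p and correlation r.\<close>
definition cb_pmf :: "real \<Rightarrow> real \<Rightarrow> bool \<Rightarrow> bool \<Rightarrow> real" where
  "cb_pmf p r a b =
     (if a \<and> b then p\<^sup>2 + r * p * (1 - p)
      else if \<not> a \<and> \<not> b then (1 - p)\<^sup>2 + r * p * (1 - p)
      else (1 - r) * p * (1 - p))"

definition cb_prob :: "'n::finite param \<Rightarrow> 'n sample \<Rightarrow> real" where
  "cb_prob \<theta> z = (\<Prod>i\<in>UNIV. cb_pmf (fst \<theta> i) (snd \<theta> i) (fst z i) (snd z i))"

definition cb_expect :: "'n::finite param \<Rightarrow> ('n sample \<Rightarrow> real) \<Rightarrow> real" where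
  "cb_expect \<theta> S = (\<Sum>z\<in>UNIV. cb_prob \<theta> z * S z)"

definition cb_var :: "'n::finite param \<Rightarrow> ('n sample \<Rightarrow> real) \<Rightarrow> real" where
  "cb_var \<theta> S = cb_expect \<theta> (\<lambda>z. (S z - cb_expect \<theta> S)\<^sup>2)"

definition unbiased :: "'n::finite param set \<Rightarrow> ('n param \<Rightarrow> real) \<Rightarrow> ('n sample \<Rightarrow> real) \<Rightarrow> bool" where
  "unbiased \<Theta> g S \<longleftrightarrow> (\<forall>\<theta>\<in>\<Theta>. cb_expect \<theta> S = g \<theta>)"

definition UMVU :: "'n::finite param set \<Rightarrow> ('n param \<Rightarrow> real) \<Rightarrow> ('n sample \<Rightarrow> real) \<Rightarrow> bool" where
  "UMVU \<Theta> g T \<longleftrightarrow> unbiased \<Theta> g T \<and>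
     (\<forall>S. unbiased \<Theta> g S \<longrightarrow> (\<forall>\<theta>\<in>\<Theta>. cb_var \<theta> T \<le> cb_var \<theta> S))"

text \<open>\<Theta> is nondegenerate: \<Theta> \<inter> \<R>^o has an interior point relative to \<R>^o, where
  \<R>^o = {(p, 0) | p \<in> \<real>^N}. Interior is written out with a sup-norm ball.\<close>
definition nondegenerate :: "'n::finite param set \<Rightarrow> bool" where
  "nondegenerate \<Theta> \<longleftrightarrow> (\<exists>p0 (e::real). e > 0 \<and>
      (\<forall>p. (\<forall>i. \<bar>p i - p0 i\<bar> < e) \<longrightarrow> (p, (\<lambda>_. 0)) \<in> \<Theta>))"

datatype hval = HZero | HStar | HOne

definition disagree :: "'n sample \<Rightarrow> 'n \<Rightarrow> hval" where
  "disagree z i = (if fst z i \<and> snd z i then HOne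
                   else if \<not> fst z i \<and> \<not> snd z i then HZero else HStar)"

definition balanced :: "('n::finite sample \<Rightarrow> real) \<Rightarrow> 'n sample \<Rightarrow> real" where
  "balanced S z = (let A = {z'. disagree z' = disagree z} in (\<Sum>z'\<in>A. S z') / real (card A))"

end

theory Submission
  imports Defs
begin

definition invd :: "('n sample \<Rightarrow> real) \<Rightarrow> bool" where
  "invd F \<longleftrightarrow> (\<forall>z z'. disagree z = disagree z' \<longrightarrow> F z = F z')"

lemma cb_pmf_inv:
  assumes "disagree z i = disagree z' i"
  shows "cb_pmf p r (fst z i) (snd z i) = cb_pmf p r (fst z' i) (snd z' i)"
  using assms unfolding disagree_def cb_pmf_def
  by (auto split: if_splits)

lemma cb_prob_inv: "invd (cb_prob \<theta>)"
  unfolding invd_def cb_prob_def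
  by (metis (no_types, lifting) cb_pmf_inv prod.cong)

lemma balanced_inv: "invd (balanced S)"
  unfolding invd_def balanced_def by simp

lemma invd_mult: "invd F \<Longrightarrow> invd G \<Longrightarrow> invd (\<lambda>z. F z * G z)"
  unfolding invd_def by metis

lemma invd_diff: "invd F \<Longrightarrow> invd G \<Longrightarrow> invd (\<lambda>z. F z - G z)"
  unfolding invd_def by metis

lemma invd_const: "invd (\<lambda>z. c)"
  unfolding invd_def by simp

lemma fiber_zero:
  fixes S :: "('n::finite) sample \<Rightarrow> real"
  assumes "invd F"
  shows "(\<Sum>z\<in>UNIV. F z * (S z - balanced S z)) = 0"
proof -
  have "(\<Sum>z\<in>UNIV. F z * (S z - balanced S z)) =
    (\<Sum>h\<in>range disagree. \<Sum>z\<in>{z. z \<in> UNIV \<and> disagree z = h}. F z * (S z - balanced S z))"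
    by (rule sum.group[symmetric]) auto
  also have "\<dots> = 0"
  proof (rule sum.neutral, rule ballI)
    fix h assume "h \<in> range (disagree :: 'n sample \<Rightarrow> _)"
    then obtain z0 :: "'n sample" where h: "h = disagree z0" by auto
    define A where "A = {z. disagree z = disagree z0}"
    have cA: "card A > 0" unfolding A_def by (simp add: card_gt_0_iff) (metis prod.collapse)
    have "(\<Sum>z\<in>{z. z \<in> UNIV \<and> disagree z = h}. F z * (S z - balanced S z))
       = (\<Sum>z\<in>A. F z0 * (S z - (\<Sum>z'\<in>A. S z') / real (card A)))"
      unfolding h A_def
    proof (rule sum.cong)
      show "{z. z \<in> UNIV \<and> disagree z = disagree z0} = {z. disagree z = disagree z0}" by simp
    next
      have Fz: "\<And>z. disagree z = disagree z0 \<Longrightarrow> F z = F z0"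
        using assms unfolding invd_def by blast
      fix z assume "z \<in> {z. disagree z = disagree z0}"
      then show "F z * (S z - balanced S z) = F z0 * (S z - (\<Sum>z'\<in>{z. disagree z = disagree z0}. S z') / real (card {z. disagree z = disagree z0}))"
        using Fz[of z] unfolding balanced_def by (simp add: Let_def)
    qed
    also have "\<dots> = F z0 * ((\<Sum>z\<in>A. S z) - real (card A) * ((\<Sum>z'\<in>A. S z') / real (card A)))"
      by (simp add: sum_distrib_left[symmetric] sum_subtractf)
    also have "\<dots> = 0" using cA by simp
    finally show "(\<Sum>z\<in>{z. z \<in> UNIV \<and> disagree z = h}. F z * (S z - balanced S z)) = 0" .
  qed
  finally show ?thesis .
qed

lemma expect_balanced:
  fixes S :: "('n::finite) sample \<Rightarrow> real"
  shows "cb_expect \<theta> (balanced S) = cb_expect \<theta> S"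
proof -
  have "cb_expect \<theta> S - cb_expect \<theta> (balanced S) = (\<Sum>z\<in>UNIV. cb_prob \<theta> z * (S z - balanced S z))"
    unfolding cb_expect_def by (simp add: sum_subtractf[symmetric] algebra_simps)
  also have "\<dots> = 0" by (rule fiber_zero[OF cb_prob_inv])
  finally show ?thesis by simp
qed

lemma cb_pmf_nonneg:
  assumes "p \<in> {0..1}" "r \<in> {0..1}"
  shows "cb_pmf p r a b \<ge> 0"
  using assms unfolding cb_pmf_def by (auto intro!: add_nonneg_nonneg mult_nonneg_nonneg)

lemma cb_prob_nonneg:
  assumes "\<theta> \<in> R_space"
  shows "cb_prob \<theta> z \<ge> 0"
  using assms unfolding cb_prob_def R_space_def
  by (auto intro!: prod_nonneg cb_pmf_nonneg)

lemma var_balanced: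
  fixes S :: "('n::finite) sample \<Rightarrow> real"
  assumes "\<theta> \<in> R_space"
  shows "cb_var \<theta> (balanced S) \<le> cb_var \<theta> S"
proof -
  define m where "m = cb_expect \<theta> S"
  define P where "P = cb_prob \<theta>"
  define B where "B = balanced S"
  have m2: "cb_expect \<theta> (balanced S) = m" using expect_balanced m_def by simp
  have "cb_var \<theta> S - cb_var \<theta> (balanced S) =
     (\<Sum>z\<in>UNIV. P z * (S z - B z)^2) + 2 * (\<Sum>z\<in>UNIV. (P z * (B z - m)) * (S z - B z))"
    unfolding cb_var_def m2 m_def[symmetric] unfolding cb_expect_def P_def[symmetric] B_def[symmetric]
    by (simp add: sum_subtractf[symmetric] sum_distrib_left sum.distrib[symmetric] power2_eq_square algebra_simps)
  also have "(\<Sum>z\<in>UNIV. (P z * (B z - m)) * (S z - B z)) = 0"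
    unfolding B_def P_def
    by (rule fiber_zero) (intro invd_mult invd_diff cb_prob_inv balanced_inv invd_const)
  also have "(\<Sum>z\<in>UNIV. P z * (S z - B z)^2) \<ge> 0"
    unfolding P_def using cb_prob_nonneg[OF assms] by (auto intro!: sum_nonneg)
  ultimately show ?thesis by simp
qed


lemma quad_zero:
  fixes A B C a e :: real
  assumes e: "e > 0"
    and H: "\<And>t. \<bar>t - a\<bar> < e \<Longrightarrow> t^2 * A + (1-t)^2 * B + 2 * (t * (1 - t)) * C = 0"
  shows "A = 0 \<and> B = 0 \<and> C = 0"
proof -
  define d where "d = e / 2"
  have d: "d > 0" "\<bar>(a+d) - a\<bar> < e" "\<bar>(a-d) - a\<bar> < e" "\<bar>a - a\<bar> < e" using e by (auto simp: d_def)
  define \<alpha> where "\<alpha> = A + B - 2*C"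
  define \<beta> where "\<beta> = 2*C - 2*B"
  have Q: "\<And>t. t^2 * A + (1-t)^2 * B + 2 * (t * (1 - t)) * C = \<alpha> * t^2 + \<beta> * t + B"
    unfolding \<alpha>_def \<beta>_def by (simp add: power2_eq_square algebra_simps)
  have q1: "\<alpha> * (a+d)^2 + \<beta> * (a+d) + B = 0" using H[OF d(2)] Q by simp
  have q2: "\<alpha> * (a-d)^2 + \<beta> * (a-d) + B = 0" using H[OF d(3)] Q by simp
  have q3: "\<alpha> * a^2 + \<beta> * a + B = 0" using H[OF d(4)] Q by simp
  have i1: "(\<alpha> * (a+d)^2 + \<beta> * (a+d) + B) + (\<alpha> * (a-d)^2 + \<beta> * (a-d) + B) - 2 * (\<alpha> * a^2 + \<beta> * a + B) = 2 * \<alpha> * d^2"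
    by (simp add: power2_eq_square algebra_simps)
  have "2 * \<alpha> * d^2 = 0" using q1 q2 q3 i1 by simp
  hence a0: "\<alpha> = 0" using d(1) by simp
  have i2: "(\<alpha> * (a+d)^2 + \<beta> * (a+d) + B) - (\<alpha> * (a-d)^2 + \<beta> * (a-d) + B) = 4 * \<alpha> * a * d + 2 * \<beta> * d"
    by (simp add: power2_eq_square algebra_simps)
  have "2 * \<beta> * d = 0" using q1 q2 a0 i2 by simp
  hence b0: "\<beta> = 0" using d(1) by simp
  have "B = 0" using q3 a0 b0 by simp
  then show ?thesis using a0 b0 unfolding \<alpha>_def \<beta>_def by simp
qed

definition ZJ :: "'n set \<Rightarrow> 'n sample set" where
  "ZJ J = {z. \<forall>i. i \<notin> J \<longrightarrow> \<not> fst z i \<and> \<not> snd z i}"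

definition upd :: "'n sample \<Rightarrow> 'n \<Rightarrow> bool \<Rightarrow> bool \<Rightarrow> 'n sample" where
  "upd z j a b = ((fst z)(j := a), (snd z)(j := b))"

lemma invd_upd: "invd F \<Longrightarrow> invd (\<lambda>z. F (upd z j a b))"
  unfolding invd_def
proof (intro allI impI)
  fix z z' :: "'a sample"
  assume H: "\<forall>z z'. disagree z = disagree z' \<longrightarrow> F z = F z'" and D: "disagree z = disagree z'"
  have "disagree (upd z j a b) = disagree (upd z' j a b)"
  proof
    fix i
    show "disagree (upd z j a b) i = disagree (upd z' j a b) i"
      using fun_cong[OF D, of i] unfolding disagree_def upd_def by (auto split: if_splits)
  qed
  then show "F (upd z j a b) = F (upd z' j a b)" using H by blast
qed

lemma invd_swap:
  assumes "invd F"
  shows "F (upd z j True False) = F (upd z j False True)"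
proof -
  have "disagree (upd z j True False) = disagree (upd z j False True)"
    unfolding disagree_def upd_def by auto
  then show ?thesis using assms unfolding invd_def by blast
qed

lemma sum_split:
  fixes W :: "('n::finite) sample \<Rightarrow> real"
  assumes j: "j \<notin> J"
  shows "(\<Sum>z\<in>ZJ (insert j J). W z) =
    (\<Sum>z'\<in>ZJ J. W (upd z' j True True) + W (upd z' j False False)
      + W (upd z' j True False) + W (upd z' j False True))"
proof -
  define f where "f = (\<lambda>x :: 'n sample \<times> bool \<times> bool. upd (fst x) j (fst (snd x)) (snd (snd x)))"
  have inj: "inj_on f (ZJ J \<times> UNIV)"
  proof (rule inj_onI)
    fix x y assume x: "x \<in> ZJ J \<times> UNIV" and y: "y \<in> ZJ J \<times> UNIV" and e: "f x = f y"
    obtain z1 a1 b1 z2 a2 b2 where xe: "x = (z1, a1, b1)" and ye: "y = (z2, a2, b2)"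
      by (metis prod.collapse)
    have e1: "(fst z1)(j := a1) = (fst z2)(j := a2)" and e2: "(snd z1)(j := b1) = (snd z2)(j := b2)"
      using e unfolding f_def upd_def xe ye by auto
    have "a1 = a2" using fun_cong[OF e1, of j] by simp
    moreover have "b1 = b2" using fun_cong[OF e2, of j] by simp
    moreover have "fst z1 = fst z2"
    proof
      fix i show "fst z1 i = fst z2 i"
        using fun_cong[OF e1, of i] x y j unfolding xe ye ZJ_def by (cases "i = j") auto
    qed
    moreover have "snd z1 = snd z2"
    proof
      fix i show "snd z1 i = snd z2 i"
        using fun_cong[OF e2, of i] x y j unfolding xe ye ZJ_def by (cases "i = j") auto
    qed
    ultimately show "x = y" unfolding xe ye by (simp add: prod_eq_iff)
  qed
  have img: "f ` (ZJ J \<times> UNIV) = ZJ (insert j J)"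
  proof
    show "f ` (ZJ J \<times> UNIV) \<subseteq> ZJ (insert j J)"
      unfolding f_def upd_def ZJ_def by auto
  next
    show "ZJ (insert j J) \<subseteq> f ` (ZJ J \<times> UNIV)"
    proof
      fix z assume z: "z \<in> ZJ (insert j J)"
      define z0 where "z0 = upd z j False False"
      have "z0 \<in> ZJ J" using z unfolding z0_def upd_def ZJ_def by auto
      moreover have "z = f (z0, fst z j, snd z j)"
        unfolding f_def z0_def upd_def by (simp add: prod_eq_iff)
      ultimately show "z \<in> f ` (ZJ J \<times> UNIV)" by blast
    qed
  qed
  have "(\<Sum>z\<in>ZJ (insert j J). W z) = (\<Sum>x\<in>ZJ J \<times> UNIV. W (f x))"
    using sum.reindex[OF inj, of W] img by simp
  also have "\<dots> = (\<Sum>z'\<in>ZJ J. \<Sum>ab\<in>UNIV. W (f (z', ab)))"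
    by (subst sum.cartesian_product) (simp add: case_prod_unfold)
  also have "\<dots> = (\<Sum>z'\<in>ZJ J. W (upd z' j True True) + W (upd z' j False False)
      + W (upd z' j True False) + W (upd z' j False True))"
  proof (rule sum.cong)
    fix z' :: "'n sample"
    have U: "(UNIV :: (bool \<times> bool) set) = {(True,True),(False,False),(True,False),(False,True)}"
      by auto
    show "(\<Sum>ab\<in>UNIV. W (f (z', ab))) = W (upd z' j True True) + W (upd z' j False False)
      + W (upd z' j True False) + W (upd z' j False True)"
      unfolding U f_def by simp
  qed simp
  finally show ?thesis .
qed

lemma complete_aux:
  fixes J :: "('n::finite) set" and p0 :: "'n \<Rightarrow> real"
  assumes e: "e > 0"
  shows "\<forall>F. invd F \<longrightarrow>
    (\<forall>p. (\<forall>i. \<bar>p i - p0 i\<bar> < e) \<longrightarrow>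
       (\<Sum>z\<in>ZJ J. (\<Prod>i\<in>J. cb_pmf (p i) 0 (fst z i) (snd z i)) * F z) = 0)
    \<longrightarrow> (\<forall>z\<in>ZJ J. F z = 0)"
  using finite[of J]
proof (induction J rule: finite_induct)
  case empty
  show ?case
  proof (intro allI impI)
  fix F :: "'n sample \<Rightarrow> real"
  assume prems: "invd F" "\<forall>p. (\<forall>i. \<bar>p i - p0 i\<bar> < e) \<longrightarrow>
       (\<Sum>z\<in>ZJ {}. (\<Prod>i\<in>{}. cb_pmf (p i) 0 (fst z i) (snd z i)) * F z) = 0"
  have Z: "ZJ {} = {((\<lambda>_. False), (\<lambda>_. False))}"
    unfolding ZJ_def by (auto simp: prod_eq_iff)
  have "\<forall>i. \<bar>p0 i - p0 i\<bar> < e" using e by simp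
  then have "(\<Sum>z\<in>ZJ {}. (\<Prod>i\<in>{}. cb_pmf (p0 i) 0 (fst z i) (snd z i)) * F z) = 0"
    using prems(2) by blast
  then show "\<forall>z\<in>ZJ {}. F z = 0" unfolding Z by simp
  qed
next
  case (insert j J)
  show ?case
  proof (intro allI impI)
  fix F :: "'n sample \<Rightarrow> real"
  assume prems: "invd F" "\<forall>p. (\<forall>i. \<bar>p i - p0 i\<bar> < e) \<longrightarrow>
       (\<Sum>z\<in>ZJ (insert j J). (\<Prod>i\<in>insert j J. cb_pmf (p i) 0 (fst z i) (snd z i)) * F z) = 0"
  let ?c = "\<lambda>p z. (\<Prod>i\<in>J. cb_pmf (p i) 0 (fst z i) (snd z i))"
  define X where "X = (\<lambda>p a b. \<Sum>z'\<in>ZJ J. ?c p z' * F (upd z' j a b))"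
  have X0: "X p a b = 0" if p: "\<forall>i. \<bar>p i - p0 i\<bar> < e" for p a b
  proof -
    have XTF: "X p True False = X p False True"
      unfolding X_def using invd_swap[OF prems(1)] by simp
    have "t^2 * X p True True + (1-t)^2 * X p False False + 2 * (t * (1 - t)) * X p True False = 0"
      if t: "\<bar>t - p0 j\<bar> < e" for t
    proof -
      define p' where "p' = p(j := t)"
      have p': "\<forall>i. \<bar>p' i - p0 i\<bar> < e" using p t unfolding p'_def by auto
      have cc: "(\<Prod>i\<in>insert j J. cb_pmf (p' i) 0 (fst (upd z' j a b) i) (snd (upd z' j a b) i))
          = cb_pmf t 0 a b * ?c p z'" for z' a b
      proof -
        have "(\<Prod>i\<in>insert j J. cb_pmf (p' i) 0 (fst (upd z' j a b) i) (snd (upd z' j a b) i))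
          = cb_pmf (p' j) 0 (fst (upd z' j a b) j) (snd (upd z' j a b) j) *
            (\<Prod>i\<in>J. cb_pmf (p' i) 0 (fst (upd z' j a b) i) (snd (upd z' j a b) i))"
          using insert.hyps by (simp add: prod.insert)
        also have "(\<Prod>i\<in>J. cb_pmf (p' i) 0 (fst (upd z' j a b) i) (snd (upd z' j a b) i)) = ?c p z'"
          using insert.hyps(2) unfolding p'_def upd_def by (intro prod.cong) auto
        finally show ?thesis unfolding p'_def upd_def by simp
      qed
      have "0 = (\<Sum>z\<in>ZJ (insert j J). (\<Prod>i\<in>insert j J. cb_pmf (p' i) 0 (fst z i) (snd z i)) * F z)"
        using prems(2) p' by simp
      also have "\<dots> = (\<Sum>z'\<in>ZJ J.
          cb_pmf t 0 True True * (?c p z' * F (upd z' j True True))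
        + cb_pmf t 0 False False * (?c p z' * F (upd z' j False False))
        + cb_pmf t 0 True False * (?c p z' * F (upd z' j True False))
        + cb_pmf t 0 False True * (?c p z' * F (upd z' j False True)))"
        unfolding sum_split[OF insert.hyps(2)] cc by (simp add: mult.assoc)
      also have "\<dots> = cb_pmf t 0 True True * X p True True + cb_pmf t 0 False False * X p False False
          + cb_pmf t 0 True False * X p True False + cb_pmf t 0 False True * X p False True"
        unfolding X_def by (simp add: sum.distrib sum_distrib_left)
      also have "\<dots> = t^2 * X p True True + (1-t)^2 * X p False False + 2 * (t * (1 - t)) * X p True False"
        unfolding XTF by (simp add: cb_pmf_def algebra_simps)
      finally show ?thesis by simp
    qed
    then have "X p True True = 0 \<and> X p False False = 0 \<and> X p True False = 0"
      by (intro quad_zero[OF e]) auto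
    then show ?thesis using XTF by (cases a; cases b) auto
  qed
  have F0: "\<forall>z'\<in>ZJ J. F (upd z' j a b) = 0" for a b
    using insert.IH invd_upd[OF prems(1)] X0 unfolding X_def by blast
  show "\<forall>z\<in>ZJ (insert j J). F z = 0"
  proof
    fix z assume z: "z \<in> ZJ (insert j J)"
    define z0 where "z0 = upd z j False False"
    have "z0 \<in> ZJ J" using z unfolding z0_def upd_def ZJ_def by auto
    moreover have "z = upd z0 j (fst z j) (snd z j)"
      unfolding z0_def upd_def by (simp add: prod_eq_iff)
    ultimately show "F z = 0" using F0 by metis
  qed
  qed
qed

lemma completeness:
  fixes F :: "('n::finite) sample \<Rightarrow> real"
  assumes "invd F" "e > 0"
    and "\<And>p. (\<forall>i. \<bar>p i - p0 i\<bar> < e) \<Longrightarrow> cb_expect (p, (\<lambda>_. 0)) F = 0"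
  shows "F z = 0"
proof -
  have Z: "ZJ (UNIV :: 'n set) = UNIV" unfolding ZJ_def by auto
  have "\<forall>z\<in>ZJ (UNIV :: 'n set). F z = 0"
    using complete_aux[OF assms(2), of p0 UNIV] assms(1,3)
    unfolding Z cb_expect_def cb_prob_def by simp
  then show ?thesis unfolding Z by blast
qed

theorem theorem3:
  fixes \<Theta> :: "('n::finite) param set"
    and g :: "'n param \<Rightarrow> real"
    and S :: "'n sample \<Rightarrow> real"
  assumes "\<Theta> \<subseteq> R_space"
    and "nondegenerate \<Theta>"
    and "unbiased \<Theta> g S"
  shows "(\<exists>T. UMVU \<Theta> g T) \<and> UMVU \<Theta> g (balanced S)"
proof -
  obtain p0 e where e: "e > 0" and ball: "\<And>p. (\<forall>i. \<bar>p i - p0 i\<bar> < e) \<Longrightarrow> (p, (\<lambda>_. 0)) \<in> \<Theta>"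
    using assms(2) unfolding nondegenerate_def by blast
  have ub: "unbiased \<Theta> g (balanced S)"
    using assms(3) unfolding unbiased_def by (simp add: expect_balanced)
  have "\<forall>S'. unbiased \<Theta> g S' \<longrightarrow> (\<forall>\<theta>\<in>\<Theta>. cb_var \<theta> (balanced S) \<le> cb_var \<theta> S')"
  proof (intro allI impI ballI)
    fix S' \<theta> assume S': "unbiased \<Theta> g S'" and th: "\<theta> \<in> \<Theta>"
    have eq: "balanced S' = balanced S"
    proof
      fix z
      have "(\<lambda>z. balanced S' z - balanced S z) z = 0"
      proof (rule completeness[OF _ e])
        show "invd (\<lambda>z. balanced S' z - balanced S z)"
          by (intro invd_diff balanced_inv)
      next
        fix p assume "\<forall>i. \<bar>p i - p0 i\<bar> < e"
        then have pin: "(p, (\<lambda>_. 0)) \<in> \<Theta>" by (rule ball)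
        have "cb_expect (p, (\<lambda>_. 0)) (\<lambda>z. balanced S' z - balanced S z)
          = cb_expect (p, (\<lambda>_. 0)) (balanced S') - cb_expect (p, (\<lambda>_. 0)) (balanced S)"
          unfolding cb_expect_def by (simp add: sum_subtractf[symmetric] algebra_simps)
        also have "\<dots> = 0" using S' assms(3) pin unfolding unbiased_def
          by (simp add: expect_balanced)
        finally show "cb_expect (p, (\<lambda>_. 0)) (\<lambda>z. balanced S' z - balanced S z) = 0" .
      qed
      then show "balanced S' z = balanced S z" by simp
    qed
    have "cb_var \<theta> (balanced S') \<le> cb_var \<theta> S'"
      using th assms(1) by (intro var_balanced) auto
    then show "cb_var \<theta> (balanced S) \<le> cb_var \<theta> S'" using eq by simp
  qed
  then have "UMVU \<Theta> g (balanced S)" using ub unfolding UMVU_def by blast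
  then show ?thesis by blast
qed

end
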